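(* For a connected cubic graph $G$, the following are equivalent: (a) $G$ is bipartite; (b) $1$ is an eigenvalue of the truncation $T(G)$; (c) $1$ is a simple eigenvalue of $T(G)$.
   Context: The truncation $T(G)$ of a cubic multigraph $G$ is the cubic graph in which every vertex $v$ of $G$ is replaced by a triangle whose three vertices correspond to the three edge-ends at $v$, and every edge $uv$ of $G$ gives an edge of $T(G)$ joining the corresponding vertices of the triangles of $u$ and $v$ (equivalently, $T(G)$ is the line graph of the subdivision of $G$). Eigenvalues are those of the adjacency matrix; simple means a $1$-dimensional eigenspace. *)

theory Defs
  imports "HOL-Analysis.Analysis"
begin

definition simple_graph :: "('a \<Rightarrow> 'a \<Rightarrow> bool) \<Rightarrow> bool" where
  "simple_graph E \<longleftrightarrow> (\<forall>u v. E u v \<longrightarrow> E v u) \<and> (\<forall>v. \<not> E v v)"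

definition cubic :: "('a::finite \<Rightarrow> 'a \<Rightarrow> bool) \<Rightarrow> bool" where
  "cubic E \<longleftrightarrow> (\<forall>v. card {w. E v w} = 3)"

definition connected_graph :: "('a \<Rightarrow> 'a \<Rightarrow> bool) \<Rightarrow> bool" where
  "connected_graph E \<longleftrightarrow> (\<forall>u v. E\<^sup>*\<^sup>* u v)"

definition bipartite :: "('a \<Rightarrow> 'a \<Rightarrow> bool) \<Rightarrow> bool" where
  "bipartite E \<longleftrightarrow> (\<exists>c :: 'a \<Rightarrow> bool. \<forall>u v. E u v \<longrightarrow> c u \<noteq> c v)"

text \<open>Truncation T(G): its vertices are the edge-ends (darts) (v,w) with E v w
(the end at v of the edge vw).  The three ends at v form a triangle, and the
two ends (v,w), (w,v) of each edge vw are joined.\<close>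

definition trunc_verts :: "('a \<Rightarrow> 'a \<Rightarrow> bool) \<Rightarrow> ('a \<times> 'a) set" where
  "trunc_verts E = {(v, w). E v w}"

definition trunc_adj :: "('a \<Rightarrow> 'a \<Rightarrow> bool) \<Rightarrow> ('a \<times> 'a) \<Rightarrow> ('a \<times> 'a) \<Rightarrow> bool" where
  "trunc_adj E d d' \<longleftrightarrow> d \<in> trunc_verts E \<and> d' \<in> trunc_verts E \<and>
     ((fst d = fst d' \<and> snd d \<noteq> snd d') \<or> (fst d = snd d' \<and> snd d = fst d'))"

text \<open>Adjacency eigenspace of a graph with finite vertex set V \<subseteq> UNIV :: 'v set
and adjacency relation R: real vectors indexed by V (coordinates outside V are 0)
with A x = \<mu> x, where A is the 0/1 adjacency matrix of R on V.\<close>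

definition adj_eigenspace ::
  "'v::finite set \<Rightarrow> ('v \<Rightarrow> 'v \<Rightarrow> bool) \<Rightarrow> real \<Rightarrow> (real ^ 'v) set" where
  "adj_eigenspace V R \<mu> = {x. (\<forall>v. v \<notin> V \<longrightarrow> x $ v = 0) \<and>
     (\<forall>v\<in>V. (\<Sum>w\<in>V. (if R v w then 1 else 0) * x $ w) = \<mu> * x $ v)}"

definition adj_eigenvalue :: "'v::finite set \<Rightarrow> ('v \<Rightarrow> 'v \<Rightarrow> bool) \<Rightarrow> real \<Rightarrow> bool" where
  "adj_eigenvalue V R \<mu> \<longleftrightarrow> (\<exists>x \<in> adj_eigenspace V R \<mu>. x \<noteq> 0)"

definition simple_adj_eigenvalue :: "'v::finite set \<Rightarrow> ('v \<Rightarrow> 'v \<Rightarrow> bool) \<Rightarrow> real \<Rightarrow> bool" where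
  "simple_adj_eigenvalue V R \<mu> \<longleftrightarrow> dim (adj_eigenspace V R \<mu>) = 1"

end

theory Submission
  imports Defs
begin

definition dsum :: "('a::finite \<Rightarrow> 'a \<Rightarrow> bool) \<Rightarrow> real ^ ('a \<times> 'a) \<Rightarrow> 'a \<Rightarrow> real" where
  "dsum E x v = (\<Sum>u\<in>{u. E v u}. x $ (v, u))"

lemma nbr_sum:
  fixes E :: "'a::finite \<Rightarrow> 'a \<Rightarrow> bool" and x :: "real ^ ('a \<times> 'a)"
  assumes sg: "simple_graph E" and e: "E v w"
  shows "(\<Sum>d\<in>trunc_verts E. (if trunc_adj E (v,w) d then 1 else 0) * x$d)
         = x$(w,v) + dsum E x v - x$(v,w)"
proof -
  have "(\<Sum>d\<in>trunc_verts E. (if trunc_adj E (v,w) d then 1 else 0) * x$d)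
      = (\<Sum>d\<in>trunc_verts E. if trunc_adj E (v,w) d then x$d else 0)"
    by (rule sum.cong) auto
  also have "\<dots> = (\<Sum>d\<in>{d\<in>trunc_verts E. trunc_adj E (v,w) d}. x$d)"
    by (simp add: sum.inter_filter)
  also have "{d\<in>trunc_verts E. trunc_adj E (v,w) d} = insert (w,v) ((\<lambda>u. (v,u)) ` ({u. E v u} - {w}))"
    using sg e by (auto simp: trunc_adj_def trunc_verts_def simple_graph_def)
  also have "(\<Sum>d\<in>insert (w,v) ((\<lambda>u. (v,u)) ` ({u. E v u} - {w})). x$d)
      = x$(w,v) + (\<Sum>d\<in>(\<lambda>u. (v,u)) ` ({u. E v u} - {w}). x$d)"
    using sg e by (subst sum.insert) (auto simp: simple_graph_def)
  also have "(\<Sum>d\<in>(\<lambda>u. (v,u)) ` ({u. E v u} - {w}). x$d) = (\<Sum>u\<in>{u. E v u} - {w}. x$(v,u))"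
    by (subst sum.reindex) (auto simp: inj_on_def)
  also have "\<dots> = dsum E x v - x$(v,w)"
    using e by (simp add: sum_diff1 dsum_def)
  finally show ?thesis by simp
qed

lemma key:
  fixes E :: "'a::finite \<Rightarrow> 'a \<Rightarrow> bool" and x :: "real ^ ('a \<times> 'a)"
  assumes sg: "simple_graph E" and cub: "cubic E" and con: "connected_graph E"
    and xe: "x \<in> adj_eigenspace (trunc_verts E) (trunc_adj E) 1"
  shows "(\<forall>v w. E v w \<longrightarrow> dsum E x w = - dsum E x v) \<and> (\<forall>v w. E v w \<longrightarrow> x$(v,w) = dsum E x v / 3)
     \<and> (\<exists>M. \<forall>v. \<bar>dsum E x v\<bar> = M)"
proof -
  define S where "S = dsum E x"
  have sym: "\<And>v w. E v w \<Longrightarrow> E w v" using sg by (simp add: simple_graph_def)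
  have card3: "\<And>v. card {u. E v u} = 3" using cub by (simp add: cubic_def)
  have eq: "x$(w,v) = 2*x$(v,w) - S v" if "E v w" for v w
  proof -
    have "(v,w) \<in> trunc_verts E" using that by (simp add: trunc_verts_def)
    then have "(\<Sum>d\<in>trunc_verts E. (if trunc_adj E (v,w) d then 1 else 0) * x$d) = 1 * x$(v,w)"
      using xe unfolding adj_eigenspace_def by blast
    then show ?thesis using nbr_sum[OF sg that, of x] by (simp add: S_def)
  qed
  have xv: "x$(v,w) = (2*S v + S w)/3" if "E v w" for v w
    using eq[OF that] eq[OF sym[OF that]] by (simp add: field_simps)
  have nsum: "(\<Sum>w\<in>{u. E v u}. S w) = -3 * S v" for v
  proof -
    have "S v = (\<Sum>w\<in>{u. E v u}. x$(v,w))" by (simp add: S_def dsum_def)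
    also have "\<dots> = (\<Sum>w\<in>{u. E v u}. (2*S v + S w)/3)"
      by (rule sum.cong) (auto simp: xv)
    also have "\<dots> = (2*S v * 3 + (\<Sum>w\<in>{u. E v u}. S w))/3"
      by (simp add: sum_divide_distrib[symmetric] sum.distrib card3)
    finally show ?thesis by (simp add: field_simps)
  qed
  define M where "M = Max (range (\<lambda>v. \<bar>S v\<bar>))"
  have bound: "\<And>v. \<bar>S v\<bar> \<le> M" unfolding M_def by (rule Max_ge) auto
  have propg: "S w = - S v" if a: "\<bar>S v\<bar> = M" and e: "E v w" for v w
  proof -
    have nn: "0 \<le> S v * (S u + S v)" if "u \<in> {u. E v u}" for u
    proof -
      have "\<bar>S v * S u\<bar> \<le> M * M" unfolding abs_mult
        using bound[of v] bound[of u] by (intro mult_mono) auto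
      moreover have "M * M = S v * S v" using a by (metis abs_mult_self_eq)
      ultimately have "S v * S u \<ge> - (S v * S v)" by linarith
      then show ?thesis by (simp add: algebra_simps)
    qed
    have "(\<Sum>u\<in>{u. E v u}. S v * (S u + S v)) = S v * ((\<Sum>u\<in>{u. E v u}. S u) + 3 * S v)"
      by (simp add: sum_distrib_left[symmetric] sum.distrib card3)
    also have "\<dots> = 0" by (simp add: nsum)
    finally have "\<forall>u\<in>{u. E v u}. S v * (S u + S v) = 0"
      using sum_nonneg_eq_0_iff[of "{u. E v u}" "\<lambda>u. S v * (S u + S v)"] nn by auto
    then have "S v * (S w + S v) = 0" using e by auto
    then show ?thesis
    proof (cases "S v = 0")
      case True
      then have "M = 0" using a by simp
      then show ?thesis using bound[of w] True by simp
    qed simp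
  qed
  obtain u0 where u0: "\<bar>S u0\<bar> = M"
  proof -
    have "M \<in> range (\<lambda>v. \<bar>S v\<bar>)" unfolding M_def by (rule Max_in) auto
    then show ?thesis using that by auto
  qed
  have allM: "\<bar>S v\<bar> = M" for v
  proof -
    have "E\<^sup>*\<^sup>* u0 v" using con by (simp add: connected_graph_def)
    then show ?thesis
    proof (induction rule: rtranclp_induct)
      case base then show ?case using u0 .
    next
      case (step y z)
      then show ?case using propg[of y z] by simp
    qed
  qed
  have edge: "S w = - S v" if "E v w" for v w using propg[OF allM that] .
  show ?thesis
    using edge xv allM unfolding S_def[symmetric] by (auto simp: edge)
qed

lemma eig_nonzero:
  fixes E :: "'a::finite \<Rightarrow> 'a \<Rightarrow> bool" and x :: "real ^ ('a \<times> 'a)"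
  assumes sg: "simple_graph E" and cub: "cubic E" and con: "connected_graph E"
    and xe: "x \<in> adj_eigenspace (trunc_verts E) (trunc_adj E) 1" and nz: "x \<noteq> 0"
  shows "\<forall>v. dsum E x v \<noteq> 0"
proof -
  from key[OF sg cub con xe] obtain M where
    ed: "\<forall>v w. E v w \<longrightarrow> x$(v,w) = dsum E x v / 3" and M: "\<forall>v. \<bar>dsum E x v\<bar> = M" by blast
  obtain d where d: "x$d \<noteq> 0" using nz by (metis vec_eq_iff zero_index)
  then have "d \<in> trunc_verts E" using xe unfolding adj_eigenspace_def by blast
  then obtain v w where dv: "d = (v,w)" "E v w" by (auto simp: trunc_verts_def)
  then have "dsum E x v \<noteq> 0" using ed d by (metis div_0)
  then show ?thesis using M by (metis abs_eq_0)
qed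

theorem corollary6p3:
  fixes E :: "'a::finite \<Rightarrow> 'a \<Rightarrow> bool"
  assumes "simple_graph E" and "cubic E" and "connected_graph E"
  shows "(bipartite E \<longleftrightarrow> adj_eigenvalue (trunc_verts E) (trunc_adj E) 1)
       \<and> (adj_eigenvalue (trunc_verts E) (trunc_adj E) 1
            \<longleftrightarrow> simple_adj_eigenvalue (trunc_verts E) (trunc_adj E) 1)"
proof -
  note sg = assms(1) and cub = assms(2) and con = assms(3)
  let ?V = "trunc_verts E" and ?R = "trunc_adj E"
  have sym: "\<And>v w. E v w \<Longrightarrow> E w v" using sg by (simp add: simple_graph_def)
  have card3: "\<And>v. card {u. E v u} = 3" using cub by (simp add: cubic_def)
  obtain v0 w0 where e0: "E v0 w0"
  proof -
    have "{u. E undefined u} \<noteq> {}" using card3[of undefined] by (metis card.empty zero_neq_numeral)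
    then show ?thesis using that by auto
  qed
  have AB: "bipartite E \<Longrightarrow> adj_eigenvalue ?V ?R 1"
  proof -
    assume "bipartite E"
    then obtain c :: "'a \<Rightarrow> bool" where c: "\<And>u v. E u v \<Longrightarrow> c u \<noteq> c v" unfolding bipartite_def by blast
    define s where "s v = (if c v then 1 else -1::real)" for v
    define y :: "real ^ ('a \<times> 'a)" where "y = (\<chi> d. if d \<in> ?V then s (fst d) else 0)"
    have ds: "dsum E y v = 3 * s v" for v
    proof -
      have "dsum E y v = (\<Sum>u\<in>{u. E v u}. s v)"
        unfolding dsum_def y_def by (rule sum.cong) (auto simp: trunc_verts_def)
      then show ?thesis by (simp add: card3)
    qed
    have "y \<in> adj_eigenspace ?V ?R 1"
      unfolding adj_eigenspace_def
    proof (intro CollectI conjI allI impI ballI)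
      fix d assume "d \<notin> ?V" then show "y $ d = 0" by (simp add: y_def)
    next
      fix d assume "d \<in> ?V"
      then obtain v w where dv: "d = (v,w)" "E v w" by (auto simp: trunc_verts_def)
      have "y$(w,v) = s w" "y$(v,w) = s v" using dv sym by (auto simp: y_def trunc_verts_def)
      moreover have "s w = - s v" using c[OF dv(2)] by (auto simp: s_def)
      ultimately show "(\<Sum>w\<in>?V. (if ?R d w then 1 else 0) * y $ w) = 1 * y $ d"
        using nbr_sum[OF sg dv(2), of y] dv ds[of v] by simp
    qed
    moreover have "y \<noteq> 0"
    proof
      assume "y = 0"
      then have "y $ (v0,w0) = 0" by simp
      then show False using e0 by (simp add: y_def s_def trunc_verts_def split: if_splits)
    qed
    ultimately show ?thesis by (auto simp: adj_eigenvalue_def)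
  qed
  have BA: "adj_eigenvalue ?V ?R 1 \<Longrightarrow> bipartite E"
  proof -
    assume "adj_eigenvalue ?V ?R 1"
    then obtain x where xe: "x \<in> adj_eigenspace ?V ?R 1" and nz: "x \<noteq> 0"
      by (auto simp: adj_eigenvalue_def)
    have nz2: "\<forall>v. dsum E x v \<noteq> 0" using eig_nonzero[OF sg cub con xe nz] .
    have ed: "\<forall>v w. E v w \<longrightarrow> dsum E x w = - dsum E x v" using key[OF sg cub con xe] by blast
    show "bipartite E" unfolding bipartite_def
    proof (intro exI[of _ "\<lambda>v. dsum E x v > 0"] allI impI)
      fix u v assume "E u v"
      then have "dsum E x v = - dsum E x u" using ed by blast
      then show "(dsum E x u > 0) \<noteq> (dsum E x v > 0)" using nz2[rule_format, of u] by auto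
    qed
  qed
  have CB: "simple_adj_eigenvalue ?V ?R 1 \<Longrightarrow> adj_eigenvalue ?V ?R 1"
  proof -
    assume a: "simple_adj_eigenvalue ?V ?R 1"
    show ?thesis
    proof (rule ccontr)
      assume "\<not> adj_eigenvalue ?V ?R 1"
      then have "adj_eigenspace ?V ?R 1 \<subseteq> {0}" by (auto simp: adj_eigenvalue_def)
      then have d0: "dim (adj_eigenspace ?V ?R 1) = 0" by (metis dim_subset dim_singleton le_zero_eq)
      have d1: "dim (adj_eigenspace ?V ?R 1) = 1" using a unfolding simple_adj_eigenvalue_def .
      have "(0::nat) = 1" using d0 d1 by (rule trans[OF HOL.sym])
      then show False by simp
    qed
  qed
  have BC: "adj_eigenvalue ?V ?R 1 \<Longrightarrow> simple_adj_eigenvalue ?V ?R 1"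
  proof -
    assume "adj_eigenvalue ?V ?R 1"
    then obtain y where ye: "y \<in> adj_eigenspace ?V ?R 1" and nz: "y \<noteq> 0"
      by (auto simp: adj_eigenvalue_def)
    have nzy: "\<forall>v. dsum E y v \<noteq> 0" using eig_nonzero[OF sg cub con ye nz] .
    have ky: "\<forall>v w. E v w \<longrightarrow> dsum E y w = - dsum E y v" "\<forall>v w. E v w \<longrightarrow> y$(v,w) = dsum E y v / 3"
      using key[OF sg cub con ye] by blast+
    have "adj_eigenspace ?V ?R 1 = range (\<lambda>k. k *\<^sub>R y)"
    proof
      show "adj_eigenspace ?V ?R 1 \<subseteq> range (\<lambda>k. k *\<^sub>R y)"
      proof
        fix x assume xe: "x \<in> adj_eigenspace ?V ?R 1"
        have kx: "\<forall>v w. E v w \<longrightarrow> dsum E x w = - dsum E x v" "\<forall>v w. E v w \<longrightarrow> x$(v,w) = dsum E x v / 3"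
          using key[OF sg cub con xe] by blast+
        define u0 :: 'a where "u0 = undefined"
        have rat: "dsum E x v * dsum E y u0 = dsum E x u0 * dsum E y v" for v
        proof -
          have "E\<^sup>*\<^sup>* u0 v" using con by (simp add: connected_graph_def)
          then show ?thesis
          proof (induction rule: rtranclp_induct)
            case base then show ?case by simp
          next
            case (step a b)
            have "dsum E x b = - dsum E x a" "dsum E y b = - dsum E y a" using step.hyps(2) kx(1) ky(1) by blast+
            then show ?case using step.IH by simp
          qed
        qed
        define r where "r = dsum E x u0 / dsum E y u0"
        have "x = r *\<^sub>R y"
        proof (subst vec_eq_iff, intro allI)
          fix d
          show "x $ d = (r *\<^sub>R y) $ d"
          proof (cases "d \<in> ?V")
            case False
            then have "x $ d = 0" "y $ d = 0" using xe ye unfolding adj_eigenspace_def by blast+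
            then show ?thesis by simp
          next
            case True
            then obtain v w where dv: "d = (v,w)" "E v w" by (auto simp: trunc_verts_def)
            have h0: "dsum E x v = r * dsum E y v"
              using rat[of v] nzy[rule_format, of u0] unfolding r_def by (simp add: field_simps)
            have h1: "x$(v,w) = dsum E x v / 3" "y$(v,w) = dsum E y v / 3" using dv kx(2) ky(2) by blast+
            have h2: "dsum E y v = 3 * y$(v,w)" using h1(2) by simp
            have "x$(v,w) = r * (3 * y$(v,w)) / 3" by (simp only: h1(1) h0 h2)
            then show ?thesis using dv by simp
          qed
        qed
        then show "x \<in> range (\<lambda>k. k *\<^sub>R y)" by blast
      qed
    next
      show "range (\<lambda>k. k *\<^sub>R y) \<subseteq> adj_eigenspace ?V ?R 1"
      proof clarify
        fix k
        have "(\<Sum>w\<in>?V. (if ?R v w then 1 else 0) * (k * y $ w)) = k * (\<Sum>w\<in>?V. (if ?R v w then 1 else 0) * y $ w)" for v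
          by (simp add: sum_distrib_left algebra_simps)
        then show "k *\<^sub>R y \<in> adj_eigenspace ?V ?R 1"
          using ye unfolding adj_eigenspace_def by simp
      qed
    qed
    also have "range (\<lambda>k. k *\<^sub>R y) = span {y}" by (simp add: span_singleton)
    finally have "dim (adj_eigenspace ?V ?R 1) = dim {y}"
      by (simp only: dim_span)
    then show ?thesis using nz by (simp add: simple_adj_eigenvalue_def dim_singleton)
  qed
  show ?thesis using AB BA BC CB by blast
qed

end
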